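(* Let $\langle B,\wedge,{}'\rangle$ be an algebra with $\wedge$ binary and ${}'$ unary satisfying $(x\wedge y)\wedge z\approx (y\wedge z)\wedge x$ and $x\approx (x'\wedge y)'\wedge(x'\wedge y')'$. Then $x\wedge(y\wedge z)=z\wedge(y\wedge x)$ for all $x,y,z\in B$. *)

theory Defs
  imports Main
begin

end

theory Submission
  imports Defs
begin

theorem lemma9p8:
  fixes meet :: "'b \<Rightarrow> 'b \<Rightarrow> 'b" and c :: "'b \<Rightarrow> 'b"
  assumes ax1: "\<And>x y z. meet (meet x y) z = meet (meet y z) x"
    and ax2: "\<And>x y. x = meet (c (meet (c x) y)) (c (meet (c x) (c y)))"
  shows "\<forall>x y z. meet x (meet y z) = meet z (meet y x)"
proof (intro allI)
  fix x y z
  have s: "\<And>x. \<exists>a b. x = meet a b" using ax2 by blast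
  show "meet x (meet y z) = meet z (meet y x)" by (metis ax1 s)
qed

end
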